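(* Let $G$ be a totally disconnected, locally compact group and $\mathcal{H}$ a group of automorphisms of $G$. Then the collection of bounded subsets of $\mathcal{H}$ is a bornological group structure on $\mathcal{H}$; that is, singleton sets are bounded, subsets of bounded sets are bounded, finite unions of bounded sets are bounded, and products $AB=\{\alpha\beta:\alpha\in A,\beta\in B\}$ and inverses $A^{-1}$ of bounded sets $A,B$ are bounded.
   Context: Automorphisms are continuous with continuous inverse. $\mathcal{B}(G)$ is the set of compact, open subgroups of $G$ with metric $d(V,W)=\log\bigl(|V:V\cap W|\cdot|W:W\cap V|\bigr)$. A set $B$ of automorphisms of $G$ is bounded if $B.V=\{\beta(V):\beta\in B\}$ has bounded diameter in $\mathcal{B}(G)$ for some (equivalently every) $V\in\mathcal{B}(G)$. *)

theory Defs
  imports "HOL-Analysis.Analysis" "HOL-Algebra.Bij" "HOL-Algebra.Coset"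
begin

definition topological_group :: "('a, 'b) monoid_scheme \<Rightarrow> 'a topology \<Rightarrow> bool" where
  "topological_group G T \<longleftrightarrow> group G \<and> topspace T = carrier G \<and>
     continuous_map (prod_topology T T) T (\<lambda>(x, y). x \<otimes>\<^bsub>G\<^esub> y) \<and>
     continuous_map T T (\<lambda>x. inv\<^bsub>G\<^esub> x)"

definition totally_disconnected_space :: "'a topology \<Rightarrow> bool" where
  "totally_disconnected_space T \<longleftrightarrow>
     (\<forall>S. connectedin T S \<longrightarrow> S = {} \<or> (\<exists>x. S = {x}))"

definition tdlc_group :: "('a, 'b) monoid_scheme \<Rightarrow> 'a topology \<Rightarrow> bool" where
  "tdlc_group G T \<longleftrightarrow> topological_group G T \<and> locally_compact_space T \<and>
     totally_disconnected_space T"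

definition top_auto :: "('a, 'b) monoid_scheme \<Rightarrow> 'a topology \<Rightarrow> ('a \<Rightarrow> 'a) set" where
  "top_auto G T = {\<alpha> \<in> auto G. homeomorphic_map T T \<alpha>}"

definition compact_open_subgroups :: "('a, 'b) monoid_scheme \<Rightarrow> 'a topology \<Rightarrow> 'a set set" where
  "compact_open_subgroups G T = {V. subgroup V G \<and> compactin T V \<and> openin T V}"

definition rel_index :: "('a, 'b) monoid_scheme \<Rightarrow> 'a set \<Rightarrow> 'a set \<Rightarrow> nat" where
  "rel_index G V W = card ((\<lambda>v. (V \<inter> W) #>\<^bsub>G\<^esub> v) ` V)"

definition cos_dist :: "('a, 'b) monoid_scheme \<Rightarrow> 'a set \<Rightarrow> 'a set \<Rightarrow> real" where
  "cos_dist G V W = ln (real (rel_index G V W * rel_index G W V))"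

definition bounded_auts :: "('a, 'b) monoid_scheme \<Rightarrow> 'a topology \<Rightarrow> ('a \<Rightarrow> 'a) set \<Rightarrow> bool" where
  "bounded_auts G T B \<longleftrightarrow>
     (\<exists>V \<in> compact_open_subgroups G T. \<exists>M::real.
        \<forall>\<beta> \<in> B. \<forall>\<gamma> \<in> B. cos_dist G (\<beta> ` V) (\<gamma> ` V) \<le> M)"

end

theory Submission
  imports Defs
begin


context group begin

lemma rcos_eq_iff:
  assumes "subgroup H G" "x \<in> carrier G" "y \<in> carrier G"
  shows "(H #> x = H #> y) \<longleftrightarrow> x \<otimes> inv y \<in> H"
proof
  assume "H #> x = H #> y"
  then have "x \<in> H #> y" using rcos_self[OF assms(2,1)] by simp
  then show "x \<otimes> inv y \<in> H"
    using subgroup.rcos_module_imp[OF assms(1) is_group assms(3)] by blast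
next
  assume "x \<otimes> inv y \<in> H"
  then have "x \<in> H #> y"
    using subgroup.rcos_module_rev[OF assms(1) is_group assms(3,2)] by blast
  then show "H #> x = H #> y"
    using repr_independence[OF _ assms(3,1)] by simp
qed

lemma rel_index_self:
  assumes "subgroup U G"
  shows "rel_index G U U = 1"
proof -
  have "(\<lambda>v. (U \<inter> U) #> v) ` U = {U}"
    using subgroup.rcos_const[OF assms is_group] subgroup.one_closed[OF assms] by auto
  then show ?thesis unfolding rel_index_def by simp
qed

lemma card_factor:
  assumes "finite (f ` A)" "\<And>a b. a \<in> A \<Longrightarrow> b \<in> A \<Longrightarrow> f a = f b \<Longrightarrow> c a = c b"
  shows "card (c ` A) \<le> card (f ` A)"
proof -
  define h where "h p = c (SOME a. a \<in> A \<and> f a = p)" for p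
  have "c ` A = h ` (f ` A)"
  proof -
    have "h (f a) = c a" if "a \<in> A" for a
    proof -
      have "(SOME b. b \<in> A \<and> f b = f a) \<in> A \<and> f (SOME b. b \<in> A \<and> f b = f a) = f a"
        by (rule someI[of _ a]) (use that in auto)
      then show ?thesis unfolding h_def using assms(2) that by metis
    qed
    then show ?thesis by (force simp: image_image)
  qed
  then show ?thesis using card_image_le[OF assms(1), of h] by simp
qed

lemma index_triangle:
  assumes U: "subgroup U G" and V: "subgroup V G" and W: "subgroup W G"
    and fP: "finite ((\<lambda>u. (U \<inter> V) #> u) ` U)" and fQ: "finite ((\<lambda>v. (V \<inter> W) #> v) ` V)"
  shows "rel_index G U W \<le> rel_index G U V * rel_index G V W"
proof -
  define P where "P = (\<lambda>u. (U \<inter> V) #> u) ` U"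
  define Q where "Q = (\<lambda>v. (V \<inter> W) #> v) ` V"
  define r where "r C = (SOME x. x \<in> C)" for C :: "'a set"
  define f where "f u = ((U \<inter> V) #> u, (V \<inter> W) #> (u \<otimes> inv (r ((U \<inter> V) #> u))))" for u
  have UV: "subgroup (U \<inter> V) G" and VW: "subgroup (V \<inter> W) G" and UW: "subgroup (U \<inter> W) G"
    using subgroups_Inter_pair[OF U V] subgroups_Inter_pair[OF V W] subgroups_Inter_pair[OF U W] by auto
  have Uc: "U \<subseteq> carrier G" using U subgroup.subset by blast
  have Vc: "V \<subseteq> carrier G" using V subgroup.subset by blast
  have rprop: "r ((U \<inter> V) #> u) \<in> carrier G \<and> u \<otimes> inv (r ((U \<inter> V) #> u)) \<in> U \<inter> V" if "u \<in> U" for u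
  proof -
    have uc: "u \<in> carrier G" using that Uc by auto
    have "u \<in> (U \<inter> V) #> u" using rcos_self[OF uc UV] .
    then have rin: "r ((U \<inter> V) #> u) \<in> (U \<inter> V) #> u" unfolding r_def by (rule someI)
    have rc: "r ((U \<inter> V) #> u) \<in> carrier G"
      using rin r_coset_subset_G[of "U \<inter> V" u] Uc uc by auto
    have "r ((U \<inter> V) #> u) \<otimes> inv u \<in> U \<inter> V"
      using subgroup.rcos_module_imp[OF UV is_group uc rin] .
    then have "inv (r ((U \<inter> V) #> u) \<otimes> inv u) \<in> U \<inter> V"
      using subgroup.m_inv_closed[OF UV] by blast
    moreover have "inv (r ((U \<inter> V) #> u) \<otimes> inv u) = u \<otimes> inv (r ((U \<inter> V) #> u))"
      using rc uc by (simp add: inv_mult_group)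
    ultimately show ?thesis using rc by simp
  qed
  have sub: "f ` U \<subseteq> P \<times> Q"
  proof
    fix p assume "p \<in> f ` U"
    then obtain u where u: "u \<in> U" "p = f u" by blast
    have "(U \<inter> V) #> u \<in> P" unfolding P_def using u(1) by (rule imageI)
    moreover have "(V \<inter> W) #> (u \<otimes> inv (r ((U \<inter> V) #> u))) \<in> Q"
      unfolding Q_def using rprop[OF u(1)] by blast
    ultimately show "p \<in> P \<times> Q" unfolding u(2) f_def by blast
  qed
  have finPQ: "finite (P \<times> Q)" using fP fQ unfolding P_def Q_def by simp
  have key: "(U \<inter> W) #> a = (U \<inter> W) #> b" if ab: "a \<in> U" "b \<in> U" "f a = f b" for a b
  proof -
    have ac: "a \<in> carrier G" and bc: "b \<in> carrier G" using ab Uc by auto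
    have C: "(U \<inter> V) #> a = (U \<inter> V) #> b" using ab(3) unfolding f_def by simp
    define s where "s = r ((U \<inter> V) #> a)"
    have sc: "s \<in> carrier G" and as: "a \<otimes> inv s \<in> U \<inter> V"
      using rprop[OF ab(1)] unfolding s_def by auto
    have bs: "b \<otimes> inv s \<in> U \<inter> V" using rprop[OF ab(2)] C unfolding s_def by auto
    have "(V \<inter> W) #> (a \<otimes> inv s) = (V \<inter> W) #> (b \<otimes> inv s)"
      using ab(3) C unfolding f_def s_def by simp
    moreover have asc: "a \<otimes> inv s \<in> carrier G" and bsc: "b \<otimes> inv s \<in> carrier G"
      using ac bc sc by auto
    ultimately have "(a \<otimes> inv s) \<otimes> inv (b \<otimes> inv s) \<in> V \<inter> W"
      using rcos_eq_iff[OF VW asc bsc] by blast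
    moreover have "(a \<otimes> inv s) \<otimes> inv (b \<otimes> inv s) = a \<otimes> inv b"
    proof -
      have i: "inv (b \<otimes> inv s) = s \<otimes> inv b" using bc sc by (simp add: inv_mult_group)
      have "(a \<otimes> inv s) \<otimes> (s \<otimes> inv b) = a \<otimes> (inv s \<otimes> (s \<otimes> inv b))"
        using ac bc sc by (intro m_assoc) auto
      also have "\<dots> = a \<otimes> ((inv s \<otimes> s) \<otimes> inv b)"
        using bc sc by (subst m_assoc) auto
      also have "\<dots> = a \<otimes> inv b" using bc sc by (simp only: l_inv l_one inv_closed)
      finally have fin: "(a \<otimes> inv s) \<otimes> (s \<otimes> inv b) = a \<otimes> inv b" .
      show ?thesis unfolding i by (rule fin)
    qed
    ultimately have "a \<otimes> inv b \<in> V \<inter> W" by simp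
    moreover have "a \<otimes> inv b \<in> U"
      using ab U by (simp add: subgroup.m_closed subgroup.m_inv_closed)
    ultimately have "a \<otimes> inv b \<in> U \<inter> W" by simp
    then show ?thesis using rcos_eq_iff[OF UW ac bc] by simp
  qed
  have "rel_index G U W = card ((\<lambda>u. (U \<inter> W) #> u) ` U)" unfolding rel_index_def ..
  also have "\<dots> \<le> card (f ` U)"
    by (rule card_factor[OF finite_subset[OF sub finPQ] key])
  also have "\<dots> \<le> card (P \<times> Q)" by (rule card_mono[OF finPQ sub])
  also have "\<dots> = card P * card Q" by (rule card_cartesian_product)
  also have "\<dots> = rel_index G U V * rel_index G V W"
    unfolding P_def Q_def rel_index_def ..
  finally show ?thesis .
qed

lemma rel_index_auto:
  assumes a: "\<alpha> \<in> auto G" and X: "X \<subseteq> carrier G" and Y: "Y \<subseteq> carrier G"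
  shows "rel_index G (\<alpha> ` X) (\<alpha> ` Y) = rel_index G X Y"
proof -
  have hom: "\<alpha> \<in> hom G G" and bij: "bij_betw \<alpha> (carrier G) (carrier G)"
    using a by (auto simp: auto_def Bij_def)
  have inj: "inj_on \<alpha> (carrier G)" using bij bij_betw_def by blast
  have int: "\<alpha> ` X \<inter> \<alpha> ` Y = \<alpha> ` (X \<inter> Y)"
    using inj X Y by (simp add: inj_on_image_Int)
  have cos: "(\<alpha> ` (X \<inter> Y)) #> \<alpha> x = \<alpha> ` ((X \<inter> Y) #> x)" if "x \<in> X" for x
  proof -
    have xc: "x \<in> carrier G" using that X by auto
    have "\<alpha> (h \<otimes> x) = \<alpha> h \<otimes> \<alpha> x" if "h \<in> X \<inter> Y" for h
      using hom_mult[OF hom] that X xc by auto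
    then show ?thesis unfolding r_coset_def by force
  qed
  have "(\<lambda>v. (\<alpha> ` X \<inter> \<alpha> ` Y) #> v) ` (\<alpha> ` X) = image \<alpha> ` ((\<lambda>x. (X \<inter> Y) #> x) ` X)"
    using cos by (simp add: int image_image)
  moreover have "inj_on (image \<alpha>) ((\<lambda>x. (X \<inter> Y) #> x) ` X)"
  proof (rule inj_on_subset[OF inj_on_image_Pow[OF inj]])
    show "(\<lambda>x. (X \<inter> Y) #> x) ` X \<subseteq> Pow (carrier G)"
    proof
      fix C assume "C \<in> (\<lambda>x. (X \<inter> Y) #> x) ` X"
      then obtain x where x: "x \<in> X" "C = (X \<inter> Y) #> x" by auto
      have "(X \<inter> Y) #> x \<subseteq> carrier G"
        by (rule r_coset_subset_G) (use X x in auto)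
      then show "C \<in> Pow (carrier G)" using x by simp
    qed
  qed
  ultimately show ?thesis unfolding rel_index_def by (simp add: card_image)
qed

end


locale tgrp = group G for G (structure) +
  fixes T :: "'a topology"
  assumes tg: "topological_group G T"
begin

lemma top: "topspace T = carrier G" using tg by (simp add: topological_group_def)

lemma cont_mult: "continuous_map (prod_topology T T) T (\<lambda>(x, y). x \<otimes> y)"
  using tg by (simp add: topological_group_def)

lemma cont_inv: "continuous_map T T (\<lambda>x. inv x)"
  using tg by (simp add: topological_group_def)

lemma cont_paired:
  assumes "continuous_map T T f" "continuous_map T T g"
  shows "continuous_map T T (\<lambda>x. f x \<otimes> g x)"
proof -
  have "continuous_map T (prod_topology T T) (\<lambda>x. (f x, g x))"
    using assms by (rule continuous_map_pairedI)
  from continuous_map_compose[OF this cont_mult] show ?thesis by (simp add: o_def)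
qed

lemma cont_rmult: "g \<in> carrier G \<Longrightarrow> continuous_map T T (\<lambda>x. x \<otimes> g)"
  by (rule cont_paired) (auto simp: top)

lemma cont_lmult: "g \<in> carrier G \<Longrightarrow> continuous_map T T (\<lambda>x. g \<otimes> x)"
  by (rule cont_paired) (auto simp: top)

lemma open_rcos:
  assumes "openin T U" "g \<in> carrier G"
  shows "openin T (U #> g)"
proof -
  have Uc: "U \<subseteq> carrier G" using openin_subset[OF assms(1)] top by simp
  have "U #> g = {x \<in> topspace T. x \<otimes> inv g \<in> U}"
  proof (rule subset_antisym; rule subsetI)
    fix x assume "x \<in> U #> g"
    then obtain u where u: "u \<in> U" "x = u \<otimes> g" unfolding r_coset_def by auto
    then show "x \<in> {x \<in> topspace T. x \<otimes> inv g \<in> U}"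
      using Uc assms(2) by (auto simp: top m_assoc)
  next
    fix x assume x: "x \<in> {x \<in> topspace T. x \<otimes> inv g \<in> U}"
    then have "x = (x \<otimes> inv g) \<otimes> g" using assms(2) by (simp add: top m_assoc)
    then show "x \<in> U #> g" using x unfolding r_coset_def by blast
  qed
  then show ?thesis
    using openin_continuous_map_preimage[OF cont_rmult assms(1)] assms(2) by simp
qed

lemma open_lcos:
  assumes "openin T U" "g \<in> carrier G"
  shows "openin T (g <# U)"
proof -
  have Uc: "U \<subseteq> carrier G" using openin_subset[OF assms(1)] top by simp
  have "g <# U = {x \<in> topspace T. inv g \<otimes> x \<in> U}"
  proof (rule subset_antisym; rule subsetI)
    fix x assume "x \<in> g <# U"
    then obtain u where u: "u \<in> U" "x = g \<otimes> u" unfolding l_coset_def by auto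
    then show "x \<in> {x \<in> topspace T. inv g \<otimes> x \<in> U}"
      using Uc assms(2) by (auto simp: top m_assoc[symmetric])
  next
    fix x assume x: "x \<in> {x \<in> topspace T. inv g \<otimes> x \<in> U}"
    then have "x = g \<otimes> (inv g \<otimes> x)" using assms(2) by (simp add: top m_assoc[symmetric])
    then show "x \<in> g <# U" using x unfolding l_coset_def by blast
  qed
  then show ?thesis
    using openin_continuous_map_preimage[OF cont_lmult assms(1)] assms(2) by simp
qed

lemma finite_cosets:
  assumes U: "U \<in> compact_open_subgroups G T" and V: "V \<in> compact_open_subgroups G T"
  shows "finite ((\<lambda>u. (U \<inter> V) #> u) ` U)"
proof -
  have sU: "subgroup U G" and cU: "compactin T U" and oU: "openin T U"
    and sV: "subgroup V G" and oV: "openin T V"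
    using U V by (auto simp: compact_open_subgroups_def)
  have UV: "subgroup (U \<inter> V) G" using subgroups_Inter_pair sU sV by blast
  have Uc: "U \<subseteq> carrier G" using sU subgroup.subset by blast
  define C where "C = (\<lambda>u. (U \<inter> V) #> u) ` U"
  have "\<forall>B\<in>C. openin T B" unfolding C_def using open_rcos[OF openin_Int[OF oU oV]] Uc by auto
  moreover have "U \<subseteq> \<Union>C" unfolding C_def using rcos_self[OF _ UV] Uc by blast
  ultimately obtain F where F: "finite F" "F \<subseteq> C" "U \<subseteq> \<Union>F"
    using cU unfolding compactin_def by (metis (no_types, lifting))
  have "C \<subseteq> F"
  proof
    fix c assume "c \<in> C"
    then obtain u where u: "u \<in> U" "c = (U \<inter> V) #> u" unfolding C_def by auto
    then obtain f where f: "f \<in> F" "u \<in> f" using F(3) by auto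
    then obtain u' where u': "u' \<in> U" "f = (U \<inter> V) #> u'" using F(2) unfolding C_def by auto
    have "(U \<inter> V) #> u' = (U \<inter> V) #> u"
      using repr_independence[of u "U \<inter> V" u'] f u' UV Uc by auto
    then show "c \<in> F" using u u' f by simp
  qed
  then show ?thesis using F(1) finite_subset unfolding C_def by blast
qed

lemma rel_index_pos:
  assumes U: "U \<in> compact_open_subgroups G T" and V: "V \<in> compact_open_subgroups G T"
  shows "rel_index G U V \<ge> 1"
proof -
  have "U \<noteq> {}" using U subgroup.one_closed by (auto simp: compact_open_subgroups_def)
  then show ?thesis using finite_cosets[OF U V] unfolding rel_index_def
    by (simp add: Suc_le_eq card_gt_0_iff)
qed

lemma dist_sym: "cos_dist G U V = cos_dist G V U"
  by (simp add: cos_dist_def mult.commute)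

lemma dist_self: "subgroup U G \<Longrightarrow> cos_dist G U U = 0"
  by (simp add: cos_dist_def rel_index_self)

lemma dist_triangle:
  assumes U: "U \<in> compact_open_subgroups G T" and V: "V \<in> compact_open_subgroups G T"
    and W: "W \<in> compact_open_subgroups G T"
  shows "cos_dist G U W \<le> cos_dist G U V + cos_dist G V W"
proof -
  have s: "subgroup U G" "subgroup V G" "subgroup W G"
    using U V W by (auto simp: compact_open_subgroups_def)
  have t1: "rel_index G U W \<le> rel_index G U V * rel_index G V W"
    by (rule index_triangle[OF s finite_cosets[OF U V] finite_cosets[OF V W]])
  have t2: "rel_index G W U \<le> rel_index G W V * rel_index G V U"
    by (rule index_triangle[OF s(3) s(2) s(1) finite_cosets[OF W V] finite_cosets[OF V U]])
  have p: "rel_index G U V \<ge> 1" "rel_index G V U \<ge> 1" "rel_index G V W \<ge> 1" "rel_index G W V \<ge> 1"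
    "rel_index G U W \<ge> 1" "rel_index G W U \<ge> 1"
    using rel_index_pos U V W by auto
  have "rel_index G U W * rel_index G W U \<le>
        (rel_index G U V * rel_index G V U) * (rel_index G V W * rel_index G W V)"
  proof -
    have "rel_index G U W * rel_index G W U \<le> (rel_index G U V * rel_index G V W) * (rel_index G W V * rel_index G V U)"
      by (rule mult_le_mono[OF t1 t2])
    then show ?thesis by (simp add: ac_simps)
  qed
  then have le: "real (rel_index G U W * rel_index G W U) \<le>
        real (rel_index G U V * rel_index G V U) * real (rel_index G V W * rel_index G W V)"
    by (metis of_nat_le_iff of_nat_mult)
  have pos: "real (rel_index G U W * rel_index G W U) > 0"
     "real (rel_index G U V * rel_index G V U) > 0" "real (rel_index G V W * rel_index G W V) > 0"
    using p by (auto simp: Suc_le_eq)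
  have "ln (real (rel_index G U W * rel_index G W U)) \<le>
        ln (real (rel_index G U V * rel_index G V U) * real (rel_index G V W * rel_index G W V))"
    using le pos by simp
  also have "\<dots> = ln (real (rel_index G U V * rel_index G V U)) + ln (real (rel_index G V W * rel_index G W V))"
    using pos(2) pos(3) by (subst ln_mult) (auto simp del: of_nat_mult)
  finally show ?thesis unfolding cos_dist_def .
qed

lemma dist_auto:
  assumes "\<alpha> \<in> auto G" "X \<subseteq> carrier G" "Y \<subseteq> carrier G"
  shows "cos_dist G (\<alpha> ` X) (\<alpha> ` Y) = cos_dist G X Y"
  using rel_index_auto[OF assms] rel_index_auto[OF assms(1,3,2)] by (simp add: cos_dist_def)

lemma image_cos:
  assumes a: "\<alpha> \<in> top_auto G T" and V: "V \<in> compact_open_subgroups G T"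
  shows "\<alpha> ` V \<in> compact_open_subgroups G T"
proof -
  have au: "\<alpha> \<in> auto G" and hm: "homeomorphic_map T T \<alpha>" using a by (auto simp: top_auto_def)
  have "group_hom G G \<alpha>" using au is_group by (simp add: group_hom_def group_hom_axioms_def auto_def)
  then have "subgroup (\<alpha> ` V) G"
    using V group_hom.subgroup_img_is_subgroup by (auto simp: compact_open_subgroups_def)
  moreover have "compactin T (\<alpha> ` V)"
    using V image_compactin homeomorphic_imp_continuous_map[OF hm] by (auto simp: compact_open_subgroups_def)
  moreover have "openin T (\<alpha> ` V)"
    using V homeomorphic_imp_open_map[OF hm] by (auto simp: compact_open_subgroups_def open_map_def)
  ultimately show ?thesis by (simp add: compact_open_subgroups_def)
qed

end


context tgrp begin

lemma auto_sub: "\<alpha> \<in> auto G \<Longrightarrow> X \<subseteq> carrier G \<Longrightarrow> \<alpha> ` X \<subseteq> carrier G"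
  by (auto simp: auto_def hom_def dest!: subsetD)

lemma cos_sub: "V \<in> compact_open_subgroups G T \<Longrightarrow> V \<subseteq> carrier G"
  by (auto simp: compact_open_subgroups_def dest: subgroup.subset)

lemma cos_subgroup: "V \<in> compact_open_subgroups G T \<Longrightarrow> subgroup V G"
  by (auto simp: compact_open_subgroups_def)

lemma top_auto_auto: "\<alpha> \<in> top_auto G T \<Longrightarrow> \<alpha> \<in> auto G"
  by (simp add: top_auto_def)

lemma carrier_AG: "carrier (AutoGroup G) = auto G"
  by (simp add: AutoGroup_def BijGroup_def)

lemma mult_AG_image:
  assumes "\<alpha> \<in> auto G" "\<beta> \<in> auto G" "X \<subseteq> carrier G"
  shows "(\<alpha> \<otimes>\<^bsub>AutoGroup G\<^esub> \<beta>) ` X = \<alpha> ` \<beta> ` X"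
proof -
  have "\<alpha> \<in> Bij (carrier G)" "\<beta> \<in> Bij (carrier G)" using assms by (auto simp: auto_def)
  then have "\<alpha> \<otimes>\<^bsub>AutoGroup G\<^esub> \<beta> = compose (carrier G) \<alpha> \<beta>"
    by (simp add: AutoGroup_def BijGroup_def)
  then show ?thesis using assms(3) by (force simp: compose_def)
qed

lemma one_AG_image:
  assumes "X \<subseteq> carrier G"
  shows "\<one>\<^bsub>AutoGroup G\<^esub> ` X = X"
proof -
  have "\<one>\<^bsub>AutoGroup G\<^esub> = (\<lambda>x\<in>carrier G. x)" by (simp add: AutoGroup_def BijGroup_def)
  then show ?thesis using assms by force
qed

lemma inv_AG_image:
  assumes "\<alpha> \<in> auto G" "X \<subseteq> carrier G"
  shows "\<alpha> ` (inv\<^bsub>AutoGroup G\<^esub> \<alpha>) ` X = X" "inv\<^bsub>AutoGroup G\<^esub> \<alpha> \<in> auto G"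
proof -
  interpret AG: group "AutoGroup G" by (rule AutoGroup)
  have ac: "\<alpha> \<in> carrier (AutoGroup G)" using assms(1) carrier_AG by simp
  show ia: "inv\<^bsub>AutoGroup G\<^esub> \<alpha> \<in> auto G" using AG.inv_closed[OF ac] carrier_AG by simp
  have "\<alpha> \<otimes>\<^bsub>AutoGroup G\<^esub> inv\<^bsub>AutoGroup G\<^esub> \<alpha> = \<one>\<^bsub>AutoGroup G\<^esub>" using AG.r_inv[OF ac] .
  then show "\<alpha> ` (inv\<^bsub>AutoGroup G\<^esub> \<alpha>) ` X = X"
    using mult_AG_image[OF assms(1) ia assms(2)] one_AG_image[OF assms(2)] by simp
qed

definition rad :: "'a set \<Rightarrow> ('a \<Rightarrow> 'a) set \<Rightarrow> bool" where
  "rad W B \<longleftrightarrow> (\<exists>M. \<forall>\<beta>\<in>B. cos_dist G (\<beta> ` W) W \<le> M)"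

lemma bounded_iff_rad:
  assumes B: "B \<subseteq> top_auto G T" and W: "W \<in> compact_open_subgroups G T"
  shows "bounded_auts G T B \<longleftrightarrow> rad W B"
proof
  assume "bounded_auts G T B"
  then obtain V M where V: "V \<in> compact_open_subgroups G T"
    and M: "\<forall>\<beta>\<in>B. \<forall>\<gamma>\<in>B. cos_dist G (\<beta> ` V) (\<gamma> ` V) \<le> M"
    unfolding bounded_auts_def by blast
  show "rad W B"
  proof (cases "B = {}")
    case True then show ?thesis by (simp add: rad_def)
  next
    case False
    then obtain \<beta>0 where b0: "\<beta>0 \<in> B" by blast
    have "cos_dist G (\<beta> ` W) W \<le> cos_dist G W V + M + cos_dist G (\<beta>0 ` V) W" if b: "\<beta> \<in> B" for \<beta>
    proof -
      have ba: "\<beta> \<in> top_auto G T" "\<beta>0 \<in> top_auto G T" using b b0 B by auto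
      have c: "\<beta> ` W \<in> compact_open_subgroups G T" "\<beta> ` V \<in> compact_open_subgroups G T"
        "\<beta>0 ` V \<in> compact_open_subgroups G T"
        using image_cos ba W V by auto
      have "cos_dist G (\<beta> ` W) W \<le> cos_dist G (\<beta> ` W) (\<beta> ` V) + cos_dist G (\<beta> ` V) W"
        by (rule dist_triangle[OF c(1) c(2) W])
      moreover have "cos_dist G (\<beta> ` V) W \<le> cos_dist G (\<beta> ` V) (\<beta>0 ` V) + cos_dist G (\<beta>0 ` V) W"
        by (rule dist_triangle[OF c(2) c(3) W])
      moreover have "cos_dist G (\<beta> ` W) (\<beta> ` V) = cos_dist G W V"
        by (rule dist_auto[OF top_auto_auto[OF ba(1)] cos_sub[OF W] cos_sub[OF V]])
      moreover have "cos_dist G (\<beta> ` V) (\<beta>0 ` V) \<le> M" using M b b0 by blast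
      ultimately show ?thesis by linarith
    qed
    then show ?thesis unfolding rad_def by blast
  qed
next
  assume "rad W B"
  then obtain M where M: "\<forall>\<beta>\<in>B. cos_dist G (\<beta> ` W) W \<le> M" unfolding rad_def by blast
  have "cos_dist G (\<beta> ` W) (\<gamma> ` W) \<le> 2 * M" if "\<beta> \<in> B" "\<gamma> \<in> B" for \<beta> \<gamma>
  proof -
    have c: "\<beta> ` W \<in> compact_open_subgroups G T" "\<gamma> ` W \<in> compact_open_subgroups G T"
      using image_cos that B W by auto
    have "cos_dist G (\<beta> ` W) (\<gamma> ` W) \<le> cos_dist G (\<beta> ` W) W + cos_dist G W (\<gamma> ` W)"
      by (rule dist_triangle[OF c(1) W c(2)])
    moreover have "cos_dist G (\<beta> ` W) W \<le> M" "cos_dist G (\<gamma> ` W) W \<le> M" using M that by auto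
    ultimately show ?thesis using dist_sym[of W "\<gamma> ` W"] by linarith
  qed
  then show "bounded_auts G T B" unfolding bounded_auts_def using W by blast
qed

end

lemma main_from_cos:
  assumes tg: "topological_group G T"
    and H: "H \<subseteq> top_auto G T"
    and sH: "subgroup H (AutoGroup G)"
    and W: "W \<in> compact_open_subgroups G T"
  shows "(\<forall>\<alpha> \<in> H. bounded_auts G T {\<alpha>})
       \<and> (\<forall>A B. A \<subseteq> B \<and> B \<subseteq> H \<and> bounded_auts G T B \<longrightarrow> bounded_auts G T A)
       \<and> (\<forall>\<A>. finite \<A> \<and> (\<forall>A \<in> \<A>. A \<subseteq> H \<and> bounded_auts G T A)
             \<longrightarrow> bounded_auts G T (\<Union>\<A>))
       \<and> (\<forall>A B. A \<subseteq> H \<and> B \<subseteq> H \<and> bounded_auts G T A \<and> bounded_auts G T B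
             \<longrightarrow> bounded_auts G T (A <#>\<^bsub>AutoGroup G\<^esub> B))
       \<and> (\<forall>A. A \<subseteq> H \<and> bounded_auts G T A
             \<longrightarrow> bounded_auts G T (set_inv\<^bsub>AutoGroup G\<^esub> A))"
proof -
  have grp: "group G" using tg by (simp add: topological_group_def)
  interpret tgrp G T by (rule tgrp.intro[OF grp]) (simp add: tgrp_axioms_def tg)
  interpret AG: group "AutoGroup G" by (rule AutoGroup)
  have iff: "bounded_auts G T B \<longleftrightarrow> rad W B" if "B \<subseteq> H" for B
    using bounded_iff_rad[OF _ W] that H by blast
  have Ws: "W \<subseteq> carrier G" using cos_sub[OF W] .
  have Hc: "\<alpha> \<in> top_auto G T" "\<alpha> \<in> auto G" "\<alpha> ` W \<in> compact_open_subgroups G T"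
    if "\<alpha> \<in> H" for \<alpha>
    using that H image_cos[OF _ W] top_auto_auto by auto
  have P1: "\<forall>\<alpha> \<in> H. bounded_auts G T {\<alpha>}"
  proof
    fix \<alpha> assume "\<alpha> \<in> H"
    moreover have "rad W {\<alpha>}" unfolding rad_def by auto
    ultimately show "bounded_auts G T {\<alpha>}" using iff[of "{\<alpha>}"] by simp
  qed
  have P2: "\<forall>A B. A \<subseteq> B \<and> B \<subseteq> H \<and> bounded_auts G T B \<longrightarrow> bounded_auts G T A"
  proof (intro allI impI)
    fix A B assume a: "A \<subseteq> B \<and> B \<subseteq> H \<and> bounded_auts G T B"
    then have "rad W B" using iff[of B] by simp
    then have "rad W A" using a unfolding rad_def by blast
    moreover have "A \<subseteq> H" using a by blast
    ultimately show "bounded_auts G T A" using iff[of A] by simp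
  qed
  have P3: "\<forall>\<A>. finite \<A> \<and> (\<forall>A \<in> \<A>. A \<subseteq> H \<and> bounded_auts G T A) \<longrightarrow> bounded_auts G T (\<Union>\<A>)"
  proof (intro allI impI)
    fix \<A> :: "('a \<Rightarrow> 'a) set set"
    assume a: "finite \<A> \<and> (\<forall>A \<in> \<A>. A \<subseteq> H \<and> bounded_auts G T A)"
    have fin: "finite \<A>" using a by blast
    have "(\<forall>A \<in> \<A>. rad W A) \<longrightarrow> rad W (\<Union>\<A>)" using fin
    proof (induction \<A> rule: finite_induct)
      case empty then show ?case by (simp add: rad_def)
    next
      case (insert A F)
      show ?case
      proof
        assume r: "\<forall>A' \<in> insert A F. rad W A'"
        then obtain M1 where M1: "\<forall>\<beta>\<in>A. cos_dist G (\<beta> ` W) W \<le> M1" unfolding rad_def by blast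
        have "rad W (\<Union>F)" using insert r by blast
        then obtain M2 where M2: "\<forall>\<beta>\<in>\<Union>F. cos_dist G (\<beta> ` W) W \<le> M2" unfolding rad_def by blast
        have "\<forall>\<beta>\<in>\<Union>(insert A F). cos_dist G (\<beta> ` W) W \<le> max M1 M2"
        proof
          fix \<beta> assume "\<beta> \<in> \<Union>(insert A F)"
          then have "\<beta> \<in> A \<or> \<beta> \<in> \<Union>F" by simp
          then show "cos_dist G (\<beta> ` W) W \<le> max M1 M2"
          proof
            assume "\<beta> \<in> A" then show ?thesis using M1 by (meson max.coboundedI1)
          next
            assume "\<beta> \<in> \<Union>F" then show ?thesis using M2 by (meson max.coboundedI2)
          qed
        qed
        then show "rad W (\<Union>(insert A F))" unfolding rad_def by blast
      qed
    qed
    moreover have "\<forall>A \<in> \<A>. rad W A"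
    proof
      fix A assume "A \<in> \<A>" then have "A \<subseteq> H" "bounded_auts G T A" using a by auto
      then show "rad W A" using iff[of A] by simp
    qed
    ultimately have "rad W (\<Union>\<A>)" by blast
    moreover have "\<Union>\<A> \<subseteq> H" using a by blast
    ultimately show "bounded_auts G T (\<Union>\<A>)" using iff[of "\<Union>\<A>"] by simp
  qed
  have P4: "\<forall>A B. A \<subseteq> H \<and> B \<subseteq> H \<and> bounded_auts G T A \<and> bounded_auts G T B
             \<longrightarrow> bounded_auts G T (A <#>\<^bsub>AutoGroup G\<^esub> B)"
  proof (intro allI impI)
    fix A B assume a: "A \<subseteq> H \<and> B \<subseteq> H \<and> bounded_auts G T A \<and> bounded_auts G T B"
    have "rad W A" using a iff[of A] by simp
    then obtain M1 where M1: "\<forall>\<beta>\<in>A. cos_dist G (\<beta> ` W) W \<le> M1" unfolding rad_def by blast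
    have "rad W B" using a iff[of B] by simp
    then obtain M2 where M2: "\<forall>\<beta>\<in>B. cos_dist G (\<beta> ` W) W \<le> M2" unfolding rad_def by blast
    have sub: "A <#>\<^bsub>AutoGroup G\<^esub> B \<subseteq> H"
      using a subgroup.m_closed[OF sH] unfolding set_mult_def by blast
    have "cos_dist G (\<gamma> ` W) W \<le> M2 + M1" if g: "\<gamma> \<in> A <#>\<^bsub>AutoGroup G\<^esub> B" for \<gamma>
    proof -
      obtain \<alpha> \<beta> where ab: "\<alpha> \<in> A" "\<beta> \<in> B" "\<gamma> = \<alpha> \<otimes>\<^bsub>AutoGroup G\<^esub> \<beta>"
        using g unfolding set_mult_def by blast
      have aH: "\<alpha> \<in> H" "\<beta> \<in> H" using ab a by auto
      have img: "\<gamma> ` W = \<alpha> ` \<beta> ` W" using mult_AG_image[OF Hc(2)[OF aH(1)] Hc(2)[OF aH(2)] Ws] ab by simp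
      have c1: "\<alpha> ` \<beta> ` W \<in> compact_open_subgroups G T"
        using image_cos[OF Hc(1)[OF aH(1)] Hc(3)[OF aH(2)]] .
      have "cos_dist G (\<alpha> ` \<beta> ` W) W \<le> cos_dist G (\<alpha> ` \<beta> ` W) (\<alpha> ` W) + cos_dist G (\<alpha> ` W) W"
        by (rule dist_triangle[OF c1 Hc(3)[OF aH(1)] W])
      moreover have "cos_dist G (\<alpha> ` \<beta> ` W) (\<alpha> ` W) = cos_dist G (\<beta> ` W) W"
        by (rule dist_auto[OF Hc(2)[OF aH(1)] cos_sub[OF Hc(3)[OF aH(2)]] Ws])
      moreover have "cos_dist G (\<alpha> ` W) W \<le> M1" "cos_dist G (\<beta> ` W) W \<le> M2"
        using M1 M2 ab by auto
      ultimately show ?thesis unfolding img by linarith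
    qed
    then have "rad W (A <#>\<^bsub>AutoGroup G\<^esub> B)" unfolding rad_def by blast
    then show "bounded_auts G T (A <#>\<^bsub>AutoGroup G\<^esub> B)" using iff[OF sub] by simp
  qed
  have P5: "\<forall>A. A \<subseteq> H \<and> bounded_auts G T A \<longrightarrow> bounded_auts G T (set_inv\<^bsub>AutoGroup G\<^esub> A)"
  proof (intro allI impI)
    fix A assume a: "A \<subseteq> H \<and> bounded_auts G T A"
    have "rad W A" using a iff[of A] by simp
    then obtain M where M: "\<forall>\<beta>\<in>A. cos_dist G (\<beta> ` W) W \<le> M" unfolding rad_def by blast
    have sub: "set_inv\<^bsub>AutoGroup G\<^esub> A \<subseteq> H"
      using a subgroup.m_inv_closed[OF sH] unfolding SET_INV_def by blast
    have "cos_dist G (\<gamma> ` W) W \<le> M" if g: "\<gamma> \<in> set_inv\<^bsub>AutoGroup G\<^esub> A" for \<gamma>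
    proof -
      obtain \<alpha> where al: "\<alpha> \<in> A" "\<gamma> = inv\<^bsub>AutoGroup G\<^esub> \<alpha>"
        using g unfolding SET_INV_def by blast
      have aH: "\<alpha> \<in> H" "\<gamma> \<in> H" using al a sub g by auto
      have "cos_dist G (\<gamma> ` W) W = cos_dist G (\<alpha> ` \<gamma> ` W) (\<alpha> ` W)"
        by (rule dist_auto[OF Hc(2)[OF aH(1)] cos_sub[OF Hc(3)[OF aH(2)]] Ws, symmetric])
      also have "\<alpha> ` \<gamma> ` W = W" using inv_AG_image(1)[OF Hc(2)[OF aH(1)] Ws] al by simp
      also have "cos_dist G W (\<alpha> ` W) = cos_dist G (\<alpha> ` W) W" by (rule dist_sym)
      finally show ?thesis using M al by simp
    qed
    then have "rad W (set_inv\<^bsub>AutoGroup G\<^esub> A)" unfolding rad_def by blast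
    then show "bounded_auts G T (set_inv\<^bsub>AutoGroup G\<^esub> A)" using iff[OF sub] by simp
  qed
  show ?thesis using P1 P2 P3 P4 P5 by blast
qed



context tgrp begin

lemma one_closed_set: "closedin T {\<one>}" if td: "totally_disconnected_space T"
proof -
  have "connectedin T {\<one>}" using top by (simp add: connectedin_sing)
  then have c: "connectedin T (T closure_of {\<one>})" by (rule connectedin_closure_of)
  have "\<one> \<in> T closure_of {\<one>}" by (rule closure_of_subset[THEN subsetD]) (auto simp: top)
  moreover have "T closure_of {\<one>} = {} \<or> (\<exists>x. T closure_of {\<one>} = {x})"
    using td c unfolding totally_disconnected_space_def by blast
  ultimately have "T closure_of {\<one>} = {\<one>}" by auto
  then show ?thesis using closedin_closure_of[of T "{\<one>}"] by simp
qed

lemma hausdorff: "Hausdorff_space T" if td: "totally_disconnected_space T"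
proof -
  have c1: "continuous_map (prod_topology T T) (prod_topology T T) (\<lambda>p. (fst p, inv (snd p)))"
    by (intro continuous_map_pairedI continuous_map_fst continuous_map_compose[OF continuous_map_snd cont_inv, unfolded o_def])
  have c2: "continuous_map (prod_topology T T) T (\<lambda>p. fst p \<otimes> inv (snd p))"
    using continuous_map_compose[OF c1 cont_mult] by (simp add: o_def case_prod_beta)
  have cl: "closedin (prod_topology T T) {p \<in> topspace (prod_topology T T). fst p \<otimes> inv (snd p) \<in> {\<one>}}"
    by (rule closedin_continuous_map_preimage[OF c2 one_closed_set[OF td]])
  have "{p \<in> topspace (prod_topology T T). fst p \<otimes> inv (snd p) \<in> {\<one>}} = (\<lambda>x. (x, x)) ` topspace T"
  proof (rule subset_antisym; rule subsetI)
    fix p assume p: "p \<in> {p \<in> topspace (prod_topology T T). fst p \<otimes> inv (snd p) \<in> {\<one>}}"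
    obtain x y where xy: "p = (x, y)" by (cases p)
    have xc: "x \<in> carrier G" and yc: "y \<in> carrier G" and e: "x \<otimes> inv y = \<one>"
      using p xy by (auto simp: top)
    have "x = (x \<otimes> inv y) \<otimes> y" using xc yc by (simp add: m_assoc)
    also have "\<dots> = y" using e yc by simp
    finally show "p \<in> (\<lambda>x. (x, x)) ` topspace T" using xy xc by (auto simp: top)
  next
    fix p assume "p \<in> (\<lambda>x. (x, x)) ` topspace T"
    then show "p \<in> {p \<in> topspace (prod_topology T T). fst p \<otimes> inv (snd p) \<in> {\<one>}}"
      by (auto simp: top)
  qed
  then show ?thesis using cl by (simp add: Hausdorff_space_closedin_diagonal)
qed

lemma compact_open_nbhd:
  assumes lc: "locally_compact_space T" and td: "totally_disconnected_space T"
  obtains K where "compactin T K" "openin T K" "\<one> \<in> K"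
proof -
  have hs: "Hausdorff_space T" by (rule hausdorff[OF td])
  have "\<one> \<in> topspace T" using top by simp
  then obtain U K where UK: "openin T U" "compactin T K" "\<one> \<in> U" "U \<subseteq> K"
    using lc unfolding locally_compact_space_def by blast
  have "connectedin T (connected_component_of_set T \<one>)"
    by (rule connectedin_connected_component_of)
  moreover have "\<one> \<in> connected_component_of_set T \<one>"
    using top by (simp add: connected_component_of_refl)
  moreover have "connected_component_of_set T \<one> = {} \<or> (\<exists>x. connected_component_of_set T \<one> = {x})"
    using td calculation(1) unfolding totally_disconnected_space_def by (elim allE impE) (rule calculation(1), assumption)
  moreover have "\<And>S. \<one> \<in> S \<Longrightarrow> S = {} \<or> (\<exists>x. S = {x}) \<Longrightarrow> S = {\<one>}" by auto
  ultimately have cc: "connected_component_of_set T \<one> = {\<one>}" by presburger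
  have C: "{\<one>} \<in> connected_components_of T"
    unfolding connected_components_of_def
  proof (rule image_eqI[where x="\<one>"])
    show "{\<one>} = connected_component_of_set T \<one>" using cc by simp
  qed (simp add: top)
  have cs: "compactin T {\<one>}" using top by simp
  have sU: "{\<one>} \<subseteq> U" using UK(3) by simp
  have "\<exists>U' V'. openin T U' \<and> openin T V' \<and> disjnt U' V' \<and> U' \<union> V' = topspace T \<and>
    {\<one>} \<subseteq> U' \<and> U' \<subseteq> U"
  proof (rule wilder_locally_compact_component_thm[OF lc hs C cs UK(1) sU])
    fix U' V' assume "openin T U'" "openin T V'" "disjnt U' V'" "U' \<union> V' = topspace T"
      "{\<one>} \<subseteq> U'" "U' \<subseteq> U"
    then show "\<exists>U' V'. openin T U' \<and> openin T V' \<and> disjnt U' V' \<and> U' \<union> V' = topspace T \<and>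
      {\<one>} \<subseteq> U' \<and> U' \<subseteq> U" by blast
  qed
  then obtain U' V' where UV: "openin T U'" "openin T V'" "disjnt U' V'" "U' \<union> V' = topspace T"
    "{\<one>} \<subseteq> U'" "U' \<subseteq> U" by blast
  have "U' = topspace T - V'" using UV(3,4) by (auto simp: disjnt_def)
  then have "closedin T U'" using UV(2) by auto
  moreover have "U' \<subseteq> K" using UV(6) UK(4) by simp
  ultimately have "compactin T U'" using closed_compactin[OF UK(2)] by simp
  moreover have "\<one> \<in> U'" using UV(5) by simp
  ultimately show ?thesis using that UV(1) by simp
qed

lemma rcos_mono: "A \<subseteq> B \<Longrightarrow> A #> g \<subseteq> B #> g"
  unfolding r_coset_def by blast

lemma van_dantzig:
  assumes lc: "locally_compact_space T" and td: "totally_disconnected_space T"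
  shows "\<exists>V. V \<in> compact_open_subgroups G T"
proof -
  obtain K where K: "compactin T K" "openin T K" "\<one> \<in> K"
    using compact_open_nbhd[OF lc td] by blast
  have Kc: "K \<subseteq> carrier G" using openin_subset[OF K(2)] top by simp
  define M where "M = {p \<in> topspace (prod_topology T T). (\<lambda>(x, y). x \<otimes> y) p \<in> K}"
  have oM: "openin (prod_topology T T) M"
    unfolding M_def by (rule openin_continuous_map_preimage[OF cont_mult K(2)])
  have "\<forall>k\<in>K. \<exists>UW. openin T (fst UW) \<and> openin T (snd UW) \<and> k \<in> fst UW \<and> \<one> \<in> snd UW
                  \<and> fst UW \<times> snd UW \<subseteq> M"
  proof
    fix k assume k: "k \<in> K"
    have kc: "k \<in> carrier G" using k Kc by auto
    have "(k, \<one>) \<in> M" unfolding M_def using k kc by (simp add: top)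
    from oM[unfolded openin_prod_topology_alt, rule_format, OF this]
    obtain U W where "openin T U" "openin T W" "k \<in> U" "\<one> \<in> W" "U \<times> W \<subseteq> M"
      by blast
    then show "\<exists>UW. openin T (fst UW) \<and> openin T (snd UW) \<and> k \<in> fst UW \<and> \<one> \<in> snd UW
                  \<and> fst UW \<times> snd UW \<subseteq> M"
      by (intro exI[of _ "(U, W)"]) simp
  qed
  then have "\<exists>g. \<forall>k\<in>K. openin T (fst (g k)) \<and> openin T (snd (g k)) \<and> k \<in> fst (g k)
      \<and> \<one> \<in> snd (g k) \<and> fst (g k) \<times> snd (g k) \<subseteq> M"
    by (rule bchoice)
  then obtain g where g: "\<forall>k\<in>K. openin T (fst (g k)) \<and> openin T (snd (g k)) \<and> k \<in> fst (g k)
      \<and> \<one> \<in> snd (g k) \<and> fst (g k) \<times> snd (g k) \<subseteq> M" ..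
  define Uf where "Uf k = fst (g k)" for k
  define Wf where "Wf k = snd (g k)" for k
  have gU: "openin T (Uf k)" "openin T (Wf k)" "k \<in> Uf k" "\<one> \<in> Wf k" "Uf k \<times> Wf k \<subseteq> M"
    if "k \<in> K" for k using g that unfolding Uf_def Wf_def by auto
  have cK: "\<forall>\<U>. (\<forall>U\<in>\<U>. openin T U) \<and> K \<subseteq> \<Union>\<U> \<longrightarrow> (\<exists>\<F>. finite \<F> \<and> \<F> \<subseteq> \<U> \<and> K \<subseteq> \<Union>\<F>)"
    using K(1) unfolding compactin_def by (rule conjunct2)
  have "(\<forall>B\<in>Uf ` K. openin T B) \<and> K \<subseteq> \<Union>(Uf ` K)" using gU by auto
  then have "\<exists>\<F>. finite \<F> \<and> \<F> \<subseteq> Uf ` K \<and> K \<subseteq> \<Union>\<F>" by (rule cK[rule_format])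
  then obtain F' where F': "finite F'" "F' \<subseteq> Uf ` K" "K \<subseteq> \<Union>F'" by blast
  obtain F where F: "F \<subseteq> K" "finite F" "F' = Uf ` F"
    using finite_subset_image[OF F'(1,2)] by blast
  define W0 where "W0 = \<Inter>(Wf ` insert \<one> F)"
  have oW0: "openin T W0" unfolding W0_def
    by (rule openin_Inter) (use F gU K(3) in auto)
  have eW0: "\<one> \<in> W0" unfolding W0_def using gU F K(3) by auto
  have W0c: "W0 \<subseteq> carrier G" using openin_subset[OF oW0] top by simp
  have KW0: "k \<otimes> w \<in> K" if kK: "k \<in> K" and wW: "w \<in> W0" for k w
  proof -
    obtain j where j: "j \<in> F" "k \<in> Uf j" using kK F'(3) F(3) by auto
    have "w \<in> Wf j" using wW j(1) unfolding W0_def by auto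
    have "j \<in> K" using j(1) F(1) by auto
    then have "(k, w) \<in> M" using gU(5)[of j] j(2) \<open>w \<in> Wf j\<close> by auto
    then show ?thesis unfolding M_def by simp
  qed
  define W1 where "W1 = W0 \<inter> {x \<in> topspace T. inv x \<in> W0}"
  have oW1: "openin T W1" unfolding W1_def
    by (rule openin_Int[OF oW0 openin_continuous_map_preimage[OF cont_inv oW0]])
  have eW1: "\<one> \<in> W1" unfolding W1_def using eW0 by (simp add: top)
  have W1c: "W1 \<subseteq> carrier G" using W0c unfolding W1_def by auto
  have W1inv: "inv w \<in> W0" if "w \<in> W1" for w using that unfolding W1_def by auto
  have shrink: "K #> w \<subseteq> K" if "w \<in> W0" for w
    using KW0 that unfolding r_coset_def by blast
  have W1K: "K #> w = K" if w: "w \<in> W1" for w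
  proof
    show "K #> w \<subseteq> K" using shrink w unfolding W1_def by auto
    have wc: "w \<in> carrier G" using w W1c by auto
    have "K = (K #> inv w) #> w" using Kc wc by (simp add: coset_mult_assoc)
    also have "\<dots> \<subseteq> K #> w" by (rule rcos_mono[OF shrink[OF W1inv[OF w]]])
    finally show "K \<subseteq> K #> w" .
  qed
  define V where "V = {g \<in> carrier G. K #> g = K}"
  have sV: "subgroup V G"
  proof
    show "V \<subseteq> carrier G" unfolding V_def by auto
    show "\<one> \<in> V" unfolding V_def using Kc by simp
    fix x y assume x: "x \<in> V" and y: "y \<in> V"
    then have xc: "x \<in> carrier G" and yc: "y \<in> carrier G" unfolding V_def by auto
    have "K #> (x \<otimes> y) = (K #> x) #> y" using Kc xc yc by (simp add: coset_mult_assoc)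
    also have "\<dots> = K" using x y unfolding V_def by simp
    finally show "x \<otimes> y \<in> V" unfolding V_def using xc yc by simp
  next
    fix x assume x: "x \<in> V"
    then have xc: "x \<in> carrier G" unfolding V_def by auto
    have "K #> inv x = (K #> x) #> inv x" using x unfolding V_def by simp
    also have "\<dots> = K" using Kc xc by (simp add: coset_mult_assoc)
    finally show "inv x \<in> V" unfolding V_def using xc by simp
  qed
  have VK: "V \<subseteq> K"
  proof
    fix x assume x: "x \<in> V"
    then have xc: "x \<in> carrier G" unfolding V_def by auto
    have "\<one> \<otimes> x \<in> K #> x" unfolding r_coset_def using K(3) by blast
    then show "x \<in> K" using x xc unfolding V_def by simp
  qed
  have lcosV: "x <# W1 \<subseteq> V" if x: "x \<in> V" for x
  proof
    fix y assume "y \<in> x <# W1"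
    then obtain w where w: "w \<in> W1" "y = x \<otimes> w" unfolding l_coset_def by blast
    have xc: "x \<in> carrier G" using x unfolding V_def by auto
    have wc: "w \<in> carrier G" using w W1c by auto
    have "K #> (x \<otimes> w) = (K #> x) #> w" using Kc xc wc by (simp add: coset_mult_assoc)
    also have "\<dots> = K" using x W1K[OF w(1)] unfolding V_def by simp
    finally show "y \<in> V" unfolding V_def using w xc wc by simp
  qed
  have selfin: "x \<in> x <# W1" if "x \<in> carrier G" for x
  proof -
    have "x \<otimes> \<one> \<in> x <# W1" unfolding l_coset_def using eW1 by blast
    then show ?thesis using that by simp
  qed
  have oV: "openin T V"
  proof -
    have "V = \<Union>((\<lambda>x. x <# W1) ` V)"
      using lcosV selfin unfolding V_def by blast
    moreover have "openin T (\<Union>((\<lambda>x. x <# W1) ` V))"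
      by (rule openin_Union) (use open_lcos[OF oW1] sV subgroup.subset in blast)
    ultimately show ?thesis by simp
  qed
  have cV: "closedin T V"
  proof -
    have out: "x <# W1 \<subseteq> carrier G - V" if x: "x \<in> carrier G - V" for x
    proof
      fix y assume "y \<in> x <# W1"
      then obtain w where w: "w \<in> W1" "y = x \<otimes> w" unfolding l_coset_def by blast
      have xc: "x \<in> carrier G" using x by auto
      have wc: "w \<in> carrier G" using w W1c by auto
      show "y \<in> carrier G - V"
      proof
        show "y \<in> carrier G" using w xc wc by simp
        show "y \<notin> V"
        proof
          assume "y \<in> V"
          then have e: "K #> (x \<otimes> w) = K" using w unfolding V_def by simp
          have "K #> x = (K #> (x \<otimes> w)) #> inv w"
            using Kc xc wc by (simp add: coset_mult_assoc m_assoc)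
          also have "\<dots> = K #> inv w" using e by simp
          also have "\<dots> = K"
          proof
            show "K #> inv w \<subseteq> K" by (rule shrink[OF W1inv[OF w(1)]])
            have "K = (K #> w) #> inv w" using Kc wc by (simp add: coset_mult_assoc)
            also have "\<dots> \<subseteq> K #> inv w" using W1K[OF w(1)] by simp
            finally show "K \<subseteq> K #> inv w" .
          qed
          finally show False using x unfolding V_def by auto
        qed
      qed
    qed
    have "carrier G - V = \<Union>((\<lambda>x. x <# W1) ` (carrier G - V))"
      using out selfin by blast
    moreover have "openin T (\<Union>((\<lambda>x. x <# W1) ` (carrier G - V)))"
      by (rule openin_Union) (use open_lcos[OF oW1] in blast)
    ultimately show ?thesis unfolding closedin_def using top sV subgroup.subset by metis
  qed
  have "compactin T V" by (rule closed_compactin[OF K(1) VK cV])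
  then show ?thesis using sV oV unfolding compact_open_subgroups_def by blast
qed

end

theorem lemma2:
  fixes G :: "('a, 'b) monoid_scheme" and T :: "'a topology" and H :: "('a \<Rightarrow> 'a) set"
  assumes "tdlc_group G T"
    and "H \<subseteq> top_auto G T"
    and "subgroup H (AutoGroup G)"
  shows "(\<forall>\<alpha> \<in> H. bounded_auts G T {\<alpha>})
       \<and> (\<forall>A B. A \<subseteq> B \<and> B \<subseteq> H \<and> bounded_auts G T B \<longrightarrow> bounded_auts G T A)
       \<and> (\<forall>\<A>. finite \<A> \<and> (\<forall>A \<in> \<A>. A \<subseteq> H \<and> bounded_auts G T A)
             \<longrightarrow> bounded_auts G T (\<Union>\<A>))
       \<and> (\<forall>A B. A \<subseteq> H \<and> B \<subseteq> H \<and> bounded_auts G T A \<and> bounded_auts G T B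
             \<longrightarrow> bounded_auts G T (A <#>\<^bsub>AutoGroup G\<^esub> B))
       \<and> (\<forall>A. A \<subseteq> H \<and> bounded_auts G T A
             \<longrightarrow> bounded_auts G T (set_inv\<^bsub>AutoGroup G\<^esub> A))"
proof -
  have tg: "topological_group G T" and lc: "locally_compact_space T"
    and td: "totally_disconnected_space T"
    using assms(1) unfolding tdlc_group_def by auto
  have grp: "group G" using tg by (simp add: topological_group_def)
  interpret tgrp G T by (rule tgrp.intro[OF grp]) (simp add: tgrp_axioms_def tg)
  obtain W where W: "W \<in> compact_open_subgroups G T" using van_dantzig[OF lc td] by blast
  show ?thesis by (rule main_from_cos[OF tg assms(2) assms(3) W])
qed

end
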